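(* Let $\ell^{\infty}$ be the space of bounded real sequences $x=(x_i)_{i\in\mathbb{N}}$, and for $p\in(0,\infty)$, $n\in\mathbb{N}$ let $$\|x\|_{\infty,p,n}:=\sup_{j\in\mathbb{N}}\Big(\frac{1}{n}\sum_{i=j}^{j+(n-1)}|x_i|^{p}\Big)^{1/p}.$$ Let $p\in[1,\infty)$ and $m,n\in\mathbb{N}$ with $n\leq m$. (i) If $n$ is a factor of $m$, i.e. $m=dn$ for some $d\in\mathbb{N}$, then $\|x\|_{\infty,p,m}\leq\|x\|_{\infty,p,n}$ for all $x\in\ell^{\infty}$. (ii) If $n$ is not a factor of $m$, then there exist $x,y\in\ell^{\infty}$ such that $\|x\|_{\infty,p,n}<\|x\|_{\infty,p,m}$ and $\|y\|_{\infty,p,m}<\|y\|_{\infty,p,n}$.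
   Context: $\mathbb{N}=\{1,2,3,\dots\}$. *)

theory Defs
  imports "HOL-Analysis.Analysis"
begin

text \<open>Sequences are indexed by the positive naturals 1,2,3,...; the value at 0 is ignored.
  The norm of the paper: sup over j \<ge> 1 of the p-th root of the mean of |x_i|^p, i = j..j+n-1.\<close>

definition norm_inf_p :: "real \<Rightarrow> nat \<Rightarrow> (nat \<Rightarrow> real) \<Rightarrow> real" where
  "norm_inf_p p n x =
     (SUP j\<in>{1..}. ((1 / real n) * (\<Sum>i=j..j+(n-1). \<bar>x i\<bar> powr p)) powr (1 / p))"

end

theory Submission
  imports Defs
begin

lemma win: "k \<ge> 1 \<Longrightarrow> {j..j+(k-1)} = {j..<j+(k::nat)}"
  by auto

definition AV :: "real \<Rightarrow> nat \<Rightarrow> (nat \<Rightarrow> real) \<Rightarrow> nat \<Rightarrow> real" where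
  "AV p k x j = (1 / real k) * (\<Sum>i=j..<j+k. \<bar>x i\<bar> powr p)"

lemma norm_AV: "k \<ge> 1 \<Longrightarrow> norm_inf_p p k x = (SUP j\<in>{1..}. AV p k x j powr (1/p))"
  unfolding norm_inf_p_def AV_def using win by simp

lemma AV_nonneg: "AV p k x j \<ge> 0"
  unfolding AV_def by (intro mult_nonneg_nonneg sum_nonneg) auto

lemma AV_bound:
  assumes "k \<ge> 1" "p > 0" "\<And>i. \<bar>x i\<bar> \<le> B"
  shows "AV p k x j powr (1/p) \<le> B"
proof -
  have B0: "B \<ge> 0" using assms(3)[of 0] by linarith
  have "(\<Sum>i=j..<j+k. \<bar>x i\<bar> powr p) \<le> (\<Sum>i=j..<j+k. B powr p)"
    by (intro sum_mono powr_mono2) (use assms in auto)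
  also have "\<dots> = real k * B powr p" by simp
  finally have "AV p k x j \<le> B powr p"
    unfolding AV_def using assms(1) by (simp add: field_simps)
  then have "AV p k x j powr (1/p) \<le> (B powr p) powr (1/p)"
    by (intro powr_mono2) (use assms AV_nonneg in auto)
  also have "\<dots> = B" using assms B0 by (simp add: powr_powr)
  finally show ?thesis .
qed

lemma bdd:
  assumes "k \<ge> 1" "p > 0" "Bseq x"
  shows "bdd_above ((\<lambda>j. AV p k x j powr (1/p)) ` {1..})"
proof -
  obtain B where "\<And>i. norm (x i) \<le> B" using assms(3) unfolding Bseq_def by auto
  then show ?thesis using AV_bound[OF assms(1,2)] by (auto intro!: bdd_aboveI2 simp: real_norm_def)
qed

lemma upper:
  assumes "k \<ge> 1" "p > 0" "Bseq x" "j \<ge> 1"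
  shows "AV p k x j powr (1/p) \<le> norm_inf_p p k x"
  unfolding norm_AV[OF assms(1)] using assms bdd[OF assms(1-3)]
  by (intro cSUP_upper) auto

lemma AV_le:
  assumes "k \<ge> 1" "p > 0" "Bseq x" "j \<ge> 1"
  shows "AV p k x j \<le> norm_inf_p p k x powr p"
proof -
  have "AV p k x j = (AV p k x j powr (1/p)) powr p"
    using assms AV_nonneg[of p k x j] by (simp add: powr_powr powr_one)
  also have "\<dots> \<le> norm_inf_p p k x powr p"
    by (intro powr_mono2 upper) (use assms in auto)
  finally show ?thesis .
qed

lemma blocks: "sum f {j..<j+n*d} = (\<Sum>k<d. sum f {j+k*n..<j+k*n+n})" for f :: "nat \<Rightarrow> real"
proof (induction d)
  case 0 then show ?case by simp
next
  case (Suc d)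
  have "sum f {j..<j+n*Suc d} = sum f {j..<j+n*d} + sum f {j+n*d..<j+n*Suc d}"
    by (rule sum.atLeastLessThan_concat[symmetric]) auto
  then show ?case using Suc by (simp add: algebra_simps)
qed

lemma part1:
  assumes "p \<ge> 1" "n \<ge> 1" "m = n*d" "d \<ge> 1" "Bseq x"
  shows "norm_inf_p p m x \<le> norm_inf_p p n x"
proof -
  have p0: "p > 0" using assms by simp
  have m1: "m \<ge> 1" using assms by simp
  let ?N = "norm_inf_p p n x"
  have N0: "?N \<ge> 0" using upper[OF assms(2) p0 assms(5), of 1] by (meson order_trans powr_ge_zero order_refl)
  show ?thesis
    unfolding norm_AV[OF m1]
  proof (rule cSUP_least)
    fix j :: nat assume j: "j \<in> {1..}"
    have "AV p m x j = (1/real d) * (\<Sum>k<d. AV p n x (j+k*n))"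
      unfolding AV_def assms(3) blocks using assms(2,4)
      by (simp add: sum_distrib_left field_simps)
    also have "\<dots> \<le> (1/real d) * (\<Sum>k<d. ?N powr p)"
      by (intro mult_left_mono sum_mono AV_le) (use assms p0 j in auto)
    also have "\<dots> = ?N powr p" using assms(4) by simp
    finally have "AV p m x j powr (1/p) \<le> (?N powr p) powr (1/p)"
      by (intro powr_mono2) (use AV_nonneg p0 in auto)
    also have "\<dots> = ?N" using N0 p0 by (simp add: powr_powr)
    finally show "AV p m x j powr (1/p) \<le> ?N" .
  qed auto
qed


lemma periodic_sum:
  fixes j :: nat
  assumes "n \<ge> 1"
  shows "(\<Sum>i=j..<j+n. h (i mod n)) = (\<Sum>k<n. h k :: real)"
proof (induction j)
  case 0 then show ?case by (simp add: atLeast0LessThan)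
next
  case (Suc j)
  have a: "(\<Sum>i=j..<j+n. h (i mod n)) = h (j mod n) + (\<Sum>i=Suc j..<j+n. h (i mod n))"
    using assms by (intro sum.atLeast_Suc_lessThan) auto
  have b: "(\<Sum>i=Suc j..<Suc j+n. h (i mod n)) = (\<Sum>i=Suc j..<j+n. h (i mod n)) + h ((j+n) mod n)"
    using assms by (simp add: sum.atLeastLessThan_Suc)
  show ?case using a b Suc by simp
qed

lemma zo: "x \<in> {0,1} \<Longrightarrow> p > 0 \<Longrightarrow> \<bar>x\<bar> powr p = (x::real)"
  by auto

lemma count_lt: "r \<le> n \<Longrightarrow> (\<Sum>k<n. if k < r then 1 else 0 :: real) = real r"
proof -
  assume "r \<le> n"
  then have "{k. k < n \<and> k < r} = {..<r}" by auto
  then show ?thesis by (simp add: sum.If_cases Int_def)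
qed

lemma ysup:
  assumes "k \<ge> 1" "p > 0"
  shows "norm_inf_p p k (\<lambda>i. if i = 1 then 1 else 0) = (1 / real k) powr (1/p)"
proof -
  let ?y = "\<lambda>i::nat. if i = 1 then 1 else (0::real)"
  have v: "AV p k ?y j = (if j = 1 then 1 / real k else 0)" if "j \<ge> 1" for j
  proof -
    have "(\<Sum>i=j..<j+k. \<bar>?y i\<bar> powr p) = (\<Sum>i=j..<j+k. ?y i)"
      using assms by (intro sum.cong) auto
    also have "\<dots> = (if j = 1 then 1 else 0)"
      using that assms by (auto simp: sum.delta)
    finally show ?thesis unfolding AV_def by simp
  qed
  have By: "Bseq ?y" by (rule BseqI[of 1]) auto
  show ?thesis unfolding norm_AV[OF assms(1)]
  proof (rule antisym)
    show "(SUP j\<in>{1..}. AV p k ?y j powr (1/p)) \<le> (1 / real k) powr (1/p)"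
      by (rule cSUP_least) (use v in auto)
    have "AV p k ?y 1 powr (1/p) \<le> (SUP j\<in>{1..}. AV p k ?y j powr (1/p))"
      using upper[OF assms By, of 1] norm_AV[OF assms(1)] by simp
    then show "(1 / real k) powr (1/p) \<le> (SUP j\<in>{1..}. AV p k ?y j powr (1/p))"
      using v[of 1] by simp
  qed
qed

lemma part2x:
  assumes "p \<ge> 1" "n \<ge> 1" "n \<le> m" "\<not> n dvd m"
  shows "\<exists>x. Bseq x \<and> norm_inf_p p n x < norm_inf_p p m x"
proof -
  define q where "q = m div n"
  define r where "r = m mod n"
  have p0: "p > 0" using assms by simp
  have r0: "r > 0" using assms(4) unfolding r_def by (auto simp: dvd_eq_mod_eq_0)
  have rn: "r < n" using assms(2) unfolding r_def by simp
  have mqr: "m = q*n + r" unfolding q_def r_def by simp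
  have m1: "m \<ge> 1" using assms by simp
  define x :: "nat \<Rightarrow> real" where "x = (\<lambda>i. if i mod n < r then 1 else 0)"
  have ax: "\<bar>x i\<bar> powr p = x i" for i unfolding x_def using p0 by auto
  have Bx: "Bseq x" by (rule BseqI[of 1]) (auto simp: x_def)
  have wn: "AV p n x j = real r / real n" for j
  proof -
    have "(\<Sum>i=j..<j+n. \<bar>x i\<bar> powr p) = (\<Sum>i=j..<j+n. (\<lambda>k. if k < r then 1 else 0::real) (i mod n))"
      unfolding ax by (simp add: x_def)
    also have "\<dots> = real r" using periodic_sum[OF assms(2), where j=j and h="\<lambda>k. if k < r then 1 else 0"] count_lt[of r n] rn by simp
    finally show ?thesis unfolding AV_def by simp
  qed
  have Nn: "norm_inf_p p n x = (real r / real n) powr (1/p)"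
    unfolding norm_AV[OF assms(2)] wn by simp
  have s1: "(\<Sum>i=n..<n+n*q. x i) = real q * real r"
    unfolding blocks
  proof -
    have "(\<Sum>i = n + k * n..<n + k * n + n. x i) = real r" for k
      unfolding x_def using periodic_sum[OF assms(2), where j="n + k*n" and h="\<lambda>k. if k < r then 1 else 0::real"]
        count_lt rn by simp
    then show "(\<Sum>k<q. \<Sum>i = n + k * n..<n + k * n + n. x i) = real q * real r" by simp
  qed
  have s2: "(\<Sum>i=n+n*q..<n+n*q+r. x i) = real r"
  proof -
    have "(\<Sum>i=n+n*q..<n+n*q+r. x i) = (\<Sum>i=n+n*q..<n+n*q+r. 1)"
    proof (intro sum.cong refl)
      fix i assume i: "i \<in> {n+n*q..<n+n*q+r}"
      then obtain t where t: "i = n*(q+1) + t" "t < r" by (metis add.commute add_less_cancel_left atLeastLessThan_iff le_Suc_ex mult_Suc_right Suc_eq_plus1)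
      have "i = t + (q+1)*n" using t by simp
      then have "i mod n = t mod n" by (metis mod_mult_self1)
      then have "i mod n = t" using rn t by simp
      then show "x i = 1" using t unfolding x_def by simp
    qed
    then show ?thesis by simp
  qed
  have sm: "(\<Sum>i=n..<n+m. x i) = real (q+1) * real r"
  proof -
    have "(\<Sum>i=n..<n+m. x i) = (\<Sum>i=n..<n+n*q. x i) + (\<Sum>i=n+n*q..<n+n*q+r. x i)"
      unfolding mqr by (subst sum.atLeastLessThan_concat[symmetric]) (auto simp: algebra_simps)
    then show ?thesis using s1 s2 by (simp add: algebra_simps)
  qed
  have am: "AV p m x n = real (q+1) * real r / real m"
    unfolding AV_def ax sm by simp
  have "real r / real n < real (q+1) * real r / real m"
  proof -
    have "real r * real m < real (q+1) * real r * real n"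
      using r0 rn unfolding mqr by (simp add: algebra_simps)
    then show ?thesis using assms(2) m1 by (simp add: field_simps)
  qed
  then have "(real r / real n) powr (1/p) < AV p m x n powr (1/p)"
    unfolding am by (intro powr_less_mono2) (use p0 in auto)
  also have "\<dots> \<le> norm_inf_p p m x" using upper[OF m1 p0 Bx] assms(2) by simp
  finally show ?thesis using Nn Bx by auto
qed

theorem lemma1p3:
  fixes p :: real and m n :: nat
  assumes "p \<ge> 1" and "n \<ge> 1" and "m \<ge> 1" and "n \<le> m"
  shows "(n dvd m \<longrightarrow> (\<forall>x. Bseq x \<longrightarrow> norm_inf_p p m x \<le> norm_inf_p p n x))
       \<and> (\<not> n dvd m \<longrightarrow> (\<exists>x y. Bseq x \<and> Bseq y \<and>
              norm_inf_p p n x < norm_inf_p p m x \<and> norm_inf_p p m y < norm_inf_p p n y))"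
proof (intro conjI impI allI)
  fix x :: "nat \<Rightarrow> real" assume "n dvd m" "Bseq x"
  then obtain d where d: "m = n*d" by auto
  then have "d \<ge> 1" using assms by (cases d) auto
  then show "norm_inf_p p m x \<le> norm_inf_p p n x" using part1 assms d \<open>Bseq x\<close> by blast
next
  assume nd: "\<not> n dvd m"
  then have nm: "n < m" using assms(4) by (metis dvd_refl le_neq_implies_less)
  have p0: "p > 0" using assms by simp
  obtain x where x: "Bseq x" "norm_inf_p p n x < norm_inf_p p m x" using part2x assms nd by blast
  let ?y = "\<lambda>i::nat. if i = 1 then 1 else (0::real)"
  have By: "Bseq ?y" by (rule BseqI[of 1]) auto
  have "norm_inf_p p m ?y < norm_inf_p p n ?y"
    unfolding ysup[OF assms(3) p0] ysup[OF assms(2) p0]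
    using nm assms(2) p0 by (intro powr_less_mono2) (auto simp: field_simps)
  then show "\<exists>x y. Bseq x \<and> Bseq y \<and> norm_inf_p p n x < norm_inf_p p m x \<and> norm_inf_p p m y < norm_inf_p p n y"
    using x By by blast
qed

end
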